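(* Let $G$ be a finite simple graph. If $G$ has two distinct min-max clique coverings that both satisfy simple intersection, then $G$ contains $\mathrm{circ}(6,\{1,2\})$ as an induced subgraph.
   Context: A clique covering of $G$ is a set of cliques (vertex sets inducing complete subgraphs) such that every edge of $G$ lies in at least one of them. $\operatorname{cc}(G)$ denotes the minimum size of a clique covering. A min-max clique covering is a clique covering of size $\operatorname{cc}(G)$ in which every clique is a maximal clique of $G$. A clique covering $\{C_1,\dots,C_\ell\}$ has simple intersection if $C_i\cap C_j\cap C_k=\emptyset$ for all distinct $i,j,k$. The circulant graph $\mathrm{circ}(6,\{1,2\})$ has vertex set $\{0,\dots,5\}$ with $i$ adjacent to $i\pm1$ and $i\pm2 \pmod 6$; equivalently its vertices are the $2$-subsets of $\{1,2,3,4\}$, two being adjacent iff they intersect. *)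

theory Defs
  imports Main
begin

definition simple_graph :: "'a set \<Rightarrow> ('a \<Rightarrow> 'a \<Rightarrow> bool) \<Rightarrow> bool" where
  "simple_graph V E \<longleftrightarrow> finite V \<and> (\<forall>x y. E x y \<longrightarrow> x \<in> V \<and> y \<in> V)
     \<and> (\<forall>x y. E x y \<longrightarrow> E y x) \<and> (\<forall>x. \<not> E x x)"

definition is_clique :: "'a set \<Rightarrow> ('a \<Rightarrow> 'a \<Rightarrow> bool) \<Rightarrow> 'a set \<Rightarrow> bool" where
  "is_clique V E C \<longleftrightarrow> C \<subseteq> V \<and> (\<forall>x\<in>C. \<forall>y\<in>C. x \<noteq> y \<longrightarrow> E x y)"

definition maximal_clique :: "'a set \<Rightarrow> ('a \<Rightarrow> 'a \<Rightarrow> bool) \<Rightarrow> 'a set \<Rightarrow> bool" where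
  "maximal_clique V E C \<longleftrightarrow> is_clique V E C \<and> (\<forall>D. is_clique V E D \<and> C \<subseteq> D \<longrightarrow> D = C)"

definition clique_covering :: "'a set \<Rightarrow> ('a \<Rightarrow> 'a \<Rightarrow> bool) \<Rightarrow> 'a set set \<Rightarrow> bool" where
  "clique_covering V E \<C> \<longleftrightarrow> finite \<C> \<and> (\<forall>C\<in>\<C>. is_clique V E C)
     \<and> (\<forall>x\<in>V. \<forall>y\<in>V. E x y \<longrightarrow> (\<exists>C\<in>\<C>. x \<in> C \<and> y \<in> C))"

definition cc :: "'a set \<Rightarrow> ('a \<Rightarrow> 'a \<Rightarrow> bool) \<Rightarrow> nat" where
  "cc V E = (LEAST k. \<exists>\<C>. clique_covering V E \<C> \<and> card \<C> = k)"

definition min_max_clique_covering :: "'a set \<Rightarrow> ('a \<Rightarrow> 'a \<Rightarrow> bool) \<Rightarrow> 'a set set \<Rightarrow> bool" where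
  "min_max_clique_covering V E \<C> \<longleftrightarrow> clique_covering V E \<C> \<and> card \<C> = cc V E
     \<and> (\<forall>C\<in>\<C>. maximal_clique V E C)"

definition simple_intersection :: "'a set set \<Rightarrow> bool" where
  "simple_intersection \<C> \<longleftrightarrow> (\<forall>C1\<in>\<C>. \<forall>C2\<in>\<C>. \<forall>C3\<in>\<C>.
     C1 \<noteq> C2 \<and> C1 \<noteq> C3 \<and> C2 \<noteq> C3 \<longrightarrow> C1 \<inter> C2 \<inter> C3 = {})"

text \<open>Adjacency of circ(6,{1,2}) on vertices 0..5: i ~ j iff j - i = +-1 or +-2 mod 6.\<close>
definition circ6_adj :: "nat \<Rightarrow> nat \<Rightarrow> bool" where
  "circ6_adj i j \<longleftrightarrow> (int j - int i) mod 6 \<in> {1, 2, 4, 5}"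

definition has_induced_circ6 :: "'a set \<Rightarrow> ('a \<Rightarrow> 'a \<Rightarrow> bool) \<Rightarrow> bool" where
  "has_induced_circ6 V E \<longleftrightarrow> (\<exists>f :: nat \<Rightarrow> 'a. inj_on f {0..<6} \<and> f ` {0..<6} \<subseteq> V
     \<and> (\<forall>i<6. \<forall>j<6. E (f i) (f j) \<longleftrightarrow> circ6_adj i j))"

end

theory Submission
  imports Defs
begin

lemma clique_edge:
  assumes "is_clique V E K" "a \<in> K" "b \<in> K" "a \<noteq> b" shows "E a b"
  using assms unfolding is_clique_def by blast

lemma si3:
  assumes "simple_intersection \<C>" "A\<in>\<C>" "B\<in>\<C>" "S\<in>\<C>" "A\<noteq>B" "v\<in>A" "v\<in>B" "v\<in>S"
  shows "S = A \<or> S = B"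
  using assms unfolding simple_intersection_def by blast

lemma cov_edge:
  assumes "simple_graph V E" "clique_covering V E \<C>" "E a b"
  shows "\<exists>K\<in>\<C>. a \<in> K \<and> b \<in> K"
  using assms unfolding simple_graph_def clique_covering_def by blast

lemma cov_clique_pair:
  assumes "simple_graph V E" "clique_covering V E \<C>" "is_clique V E C" "a\<in>C" "b\<in>C" "a\<noteq>b"
  shows "\<exists>K\<in>\<C>. a \<in> K \<and> b \<in> K"
  using cov_edge[OF assms(1,2) clique_edge[OF assms(3-6)]] .

lemma struct3:
  assumes sg: "simple_graph V E" and cov: "clique_covering V E \<C>" and si: "simple_intersection \<C>"
    and C: "is_clique V E C" and notin: "\<forall>D\<in>\<C>. \<not> C \<subseteq> D"
    and xu: "x\<in>C" "u\<in>C" "x\<noteq>u"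
  shows "\<exists>P Q R y z. P\<in>\<C> \<and> Q\<in>\<C> \<and> R\<in>\<C> \<and> P\<noteq>Q \<and> P\<noteq>R \<and> Q\<noteq>R \<and> y\<in>C \<and> z\<in>C
     \<and> x\<notin>R \<and> y\<notin>P \<and> z\<notin>Q \<and>
     (\<forall>c\<in>C. (c\<in>P \<or> c\<in>Q) \<and> (c\<in>P \<or> c\<in>R) \<and> (c\<in>Q \<or> c\<in>R))"
proof -
  note pair = cov_clique_pair[OF sg cov C]
  obtain P where P: "P\<in>\<C>" "x\<in>P" "u\<in>P" using pair xu by blast
  obtain y where y: "y\<in>C" "y\<notin>P" using notin P by blast
  have xy: "x \<noteq> y" using P y by blast
  obtain Q where Q: "Q\<in>\<C>" "x\<in>Q" "y\<in>Q" using pair[OF xu(1) y(1) xy] by blast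
  have PQ: "P\<noteq>Q" using P Q y by blast
  obtain z where z: "z\<in>C" "z\<notin>Q" using notin Q by blast
  have xz: "x \<noteq> z" using Q z by blast
  have xin: "\<And>c. c\<in>C \<Longrightarrow> c \<in> P \<or> c \<in> Q"
  proof -
    fix c assume c: "c\<in>C"
    show "c \<in> P \<or> c \<in> Q"
    proof (cases "c = x")
      case True then show ?thesis using P by blast
    next
      case False
      then obtain S where S: "S\<in>\<C>" "x\<in>S" "c\<in>S" using pair[OF xu(1) c] by metis
      then have "S = P \<or> S = Q" using si3[OF si P(1) Q(1) S(1) PQ P(2) Q(2) S(2)] by blast
      then show ?thesis using S by blast
    qed
  qed
  have zP: "z\<in>P" using xin[OF z(1)] z by blast
  have yz: "y\<noteq>z" using y zP by blast
  obtain R where R: "R\<in>\<C>" "y\<in>R" "z\<in>R" using pair[OF y(1) z(1) yz] by blast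
  have PR: "P\<noteq>R" using R y by blast
  have QR: "Q\<noteq>R" using R z by blast
  have xR: "x\<notin>R"
  proof
    assume "x\<in>R"
    then show False using si P Q R PQ PR QR unfolding simple_intersection_def by blast
  qed
  have main: "\<And>c. c\<in>C \<Longrightarrow> (c\<in>P \<or> c\<in>Q) \<and> (c\<in>P \<or> c\<in>R) \<and> (c\<in>Q \<or> c\<in>R)"
  proof -
    fix c assume c: "c\<in>C"
    have "c \<in> P \<and> c \<in> Q \<or> c \<in> R"
    proof (cases "c\<in>P \<and> c\<in>Q")
      case True then show ?thesis by blast
    next
      case False
      then have cases: "c\<in>P \<and> c\<notin>Q \<or> c\<in>Q \<and> c\<notin>P" using xin[OF c] by blast
      show ?thesis
      proof (cases "c\<in>P \<and> c\<notin>Q")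
        case True
        then have "c \<noteq> y" using Q by blast
        then obtain S where S: "S\<in>\<C>" "y\<in>S" "c\<in>S" using pair[OF y(1) c] by metis
        have "S = Q \<or> S = R" using si3[OF si Q(1) R(1) S(1) QR Q(3) R(2) S(2)] .
        then show ?thesis using S True by blast
      next
        case False
        then have cc: "c\<in>Q" "c\<notin>P" using cases by blast+
        then have "c \<noteq> z" using zP by blast
        then obtain S where S: "S\<in>\<C>" "z\<in>S" "c\<in>S" using pair[OF z(1) c] by metis
        have "S = P \<or> S = R" using si3[OF si P(1) R(1) S(1) PR zP R(3) S(2)] .
        then show ?thesis using S cc by blast
      qed
    qed
    then show "(c\<in>P \<or> c\<in>Q) \<and> (c\<in>P \<or> c\<in>R) \<and> (c\<in>Q \<or> c\<in>R)" using xin[OF c] by blast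
  qed
  show ?thesis
    apply (rule exI[of _ P], rule exI[of _ Q], rule exI[of _ R], rule exI[of _ y], rule exI[of _ z])
    using P(1) Q(1) R(1) PQ PR QR y z xR main by simp
qed

lemma both_false:
  assumes sg: "simple_graph V E" and maxC: "maximal_clique V E C"
    and D: "is_clique V E D" and A: "is_clique V E A"
    and cov3: "\<forall>c\<in>C. c\<in>D \<or> c\<in>A"
    and d: "d\<in>D" "d\<in>A" "d\<notin>C"
  shows False
proof -
  have dV: "d \<in> V" using D d unfolding is_clique_def by blast
  have "\<forall>c\<in>C. E d c \<and> E c d"
  proof
    fix c assume c: "c\<in>C"
    have "c \<noteq> d" using c d by blast
    then have "E d c" using cov3 c clique_edge[OF D d(1)] clique_edge[OF A d(2)] by blast
    then show "E d c \<and> E c d" using sg unfolding simple_graph_def by blast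
  qed
  then have "is_clique V E (insert d C)"
    using maxC dV unfolding maximal_clique_def is_clique_def by blast
  then have "insert d C = C" using maxC unfolding maximal_clique_def by blast
  then show False using d by blast
qed

lemma nonadj:
  assumes sg: "simple_graph V E" and maxC: "maximal_clique V E C"
    and cov: "clique_covering V E \<C>" and si: "simple_intersection \<C>"
    and mem: "D\<in>\<C>" "A\<in>\<C>" "B\<in>\<C>" and dist: "D\<noteq>A" "D\<noteq>B" "A\<noteq>B"
    and hprop: "\<forall>c\<in>C. (c\<in>D \<or> c\<in>A) \<and> (c\<in>D \<or> c\<in>B) \<and> (c\<in>A \<or> c\<in>B)"
    and d: "d\<in>D" "d\<notin>C" and c: "c\<in>C" "c\<notin>D"
  shows "\<not> E d c"
proof
  assume e: "E d c"
  have cl: "\<And>K. K\<in>\<C> \<Longrightarrow> is_clique V E K" using cov unfolding clique_covering_def by blast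
  obtain S where S: "S\<in>\<C>" "d\<in>S" "c\<in>S" using cov_edge[OF sg cov e] by blast
  have cAB: "c\<in>A" "c\<in>B" using hprop c by blast+
  have "S = A \<or> S = B" using si3[OF si mem(2,3) S(1) dist(3) cAB S(3)] .
  then show False
  proof
    assume "S = A"
    then show False using both_false[OF sg maxC cl[OF mem(1)] cl[OF mem(2)], of d] hprop d S by blast
  next
    assume "S = B"
    then show False using both_false[OF sg maxC cl[OF mem(1)] cl[OF mem(3)], of d] hprop d S by blast
  qed
qed

lemma adj_out:
  assumes sg: "simple_graph V E" and cov: "clique_covering V E \<C>" and si: "simple_intersection \<C>"
    and C: "C\<in>\<C>" and p: "p\<in>C" and q: "q\<notin>C" "q'\<notin>C" "E p q" "E p q'" "q\<noteq>q'"
  shows "E q q'"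
proof -
  obtain K where K: "K\<in>\<C>" "p\<in>K" "q\<in>K" using cov_edge[OF sg cov q(3)] by blast
  obtain K' where K': "K'\<in>\<C>" "p\<in>K'" "q'\<in>K'" using cov_edge[OF sg cov q(4)] by blast
  have "K \<noteq> C" "K' \<noteq> C" using K K' q by blast+
  then have "K' = K" using si3[OF si K(1) C K'(1) _ K(2) p K'(2)] by blast
  then show ?thesis using clique_edge[of V E K q q'] cov K K' q unfolding clique_covering_def by blast
qed

lemma outside:
  assumes "maximal_clique V E D" "is_clique V E C" "D \<noteq> C"
  shows "\<exists>d\<in>D. d\<notin>C"
  using assms unfolding maximal_clique_def by blast

lemma two_elems:
  assumes sg: "simple_graph V E" and mm: "min_max_clique_covering V E \<C>" and C: "C\<in>\<C>"
  shows "\<exists>x u. x\<in>C \<and> u\<in>C \<and> x\<noteq>u"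
proof (rule ccontr)
  assume "\<not> ?thesis"
  then have one: "\<forall>x\<in>C. \<forall>u\<in>C. x = u" by blast
  have cov: "clique_covering V E \<C>" and card: "card \<C> = cc V E" using mm unfolding min_max_clique_covering_def by blast+
  have fin: "finite \<C>" using cov unfolding clique_covering_def by blast
  have "clique_covering V E (\<C> - {C})"
    unfolding clique_covering_def
  proof (intro conjI ballI impI)
    show "finite (\<C> - {C})" using fin by blast
    show "\<And>K. K \<in> \<C> - {C} \<Longrightarrow> is_clique V E K" using cov unfolding clique_covering_def by blast
    fix x y assume "x\<in>V" "y\<in>V" "E x y"
    then obtain K where K: "K\<in>\<C>" "x\<in>K" "y\<in>K" using cov_edge[OF sg cov] by blast
    have "x \<noteq> y" using \<open>E x y\<close> sg unfolding simple_graph_def by blast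
    then have "K \<noteq> C" using one K by blast
    then show "\<exists>K\<in>\<C> - {C}. x \<in> K \<and> y \<in> K" using K by blast
  qed
  then have "cc V E \<le> card (\<C> - {C})" unfolding cc_def by (intro Least_le) blast
  moreover have "card (\<C> - {C}) < card \<C>" using fin C by (rule card_Diff1_less)
  ultimately show False using card by simp
qed

lemma lt6: "i<(6::nat) \<Longrightarrow> i=0 \<or> i=1 \<or> i=2 \<or> i=3 \<or> i=4 \<or> i=5" by presburger
lemma all6: "(\<forall>i<(6::nat). P i) = (P 0 \<and> P 1 \<and> P 2 \<and> P 3 \<and> P 4 \<and> P 5)"
proof
  assume "\<forall>i<(6::nat). P i" then show "P 0 \<and> P 1 \<and> P 2 \<and> P 3 \<and> P 4 \<and> P 5" by simp
next
  assume h: "P 0 \<and> P 1 \<and> P 2 \<and> P 3 \<and> P 4 \<and> P 5"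
  show "\<forall>i<(6::nat). P i"
  proof (intro allI impI)
    fix i :: nat assume "i < 6"
    then show "P i" using lt6[of i] h by auto
  qed
qed

theorem mainTheorem1:
  fixes V :: "'a set" and E :: "'a \<Rightarrow> 'a \<Rightarrow> bool" and \<C>1 \<C>2 :: "'a set set"
  assumes "simple_graph V E"
    and "min_max_clique_covering V E \<C>1" and "simple_intersection \<C>1"
    and "min_max_clique_covering V E \<C>2" and "simple_intersection \<C>2"
    and "\<C>1 \<noteq> \<C>2"
  shows "has_induced_circ6 V E"
proof -
  note sg = assms(1) and mm1 = assms(2) and si1 = assms(3) and mm2 = assms(4) and si2 = assms(5)
  have cov1: "clique_covering V E \<C>1" and card1: "card \<C>1 = cc V E" and max1: "\<forall>C\<in>\<C>1. maximal_clique V E C"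
    using mm1 unfolding min_max_clique_covering_def by blast+
  have cov2: "clique_covering V E \<C>2" and card2: "card \<C>2 = cc V E" and max2: "\<forall>C\<in>\<C>2. maximal_clique V E C"
    using mm2 unfolding min_max_clique_covering_def by blast+
  have fin2: "finite \<C>2" using cov2 unfolding clique_covering_def by blast
  have "\<not> \<C>1 \<subseteq> \<C>2"
  proof
    assume "\<C>1 \<subseteq> \<C>2"
    then have "\<C>1 = \<C>2" using card_subset_eq[OF fin2] card1 card2 by simp
    then show False using assms(6) by blast
  qed
  then obtain C where C1: "C\<in>\<C>1" and C2: "C\<notin>\<C>2" by blast
  have maxC: "maximal_clique V E C" using max1 C1 by blast
  have Ccl: "is_clique V E C" using maxC unfolding maximal_clique_def by blast
  have cl2: "\<And>K. K\<in>\<C>2 \<Longrightarrow> is_clique V E K" using cov2 unfolding clique_covering_def by blast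
  have notin: "\<forall>D\<in>\<C>2. \<not> C \<subseteq> D"
  proof (intro ballI notI)
    fix D assume D: "D\<in>\<C>2" "C \<subseteq> D"
    then have "D = C" using maxC cl2[OF D(1)] unfolding maximal_clique_def by blast
    then show False using D C2 by blast
  qed
  obtain x u where xu: "x\<in>C" "u\<in>C" "x\<noteq>u" using two_elems[OF sg mm1 C1] by blast
  obtain P Q R y z where PQR: "P\<in>\<C>2" "Q\<in>\<C>2" "R\<in>\<C>2" "P\<noteq>Q" "P\<noteq>R" "Q\<noteq>R" "y\<in>C" "z\<in>C"
     "x\<notin>R" "y\<notin>P" "z\<notin>Q" and hprop: "\<forall>c\<in>C. (c\<in>P \<or> c\<in>Q) \<and> (c\<in>P \<or> c\<in>R) \<and> (c\<in>Q \<or> c\<in>R)"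
    using struct3[OF sg cov2 si2 Ccl notin xu] by blast
  have xPQ: "x\<in>P" "x\<in>Q" using hprop xu(1) PQR by blast+
  have yQR: "y\<in>Q" "y\<in>R" using hprop PQR by blast+
  have zPR: "z\<in>P" "z\<in>R" using hprop PQR by blast+
  obtain dR where dR: "dR\<in>R" "dR\<notin>C" using outside[OF _ Ccl, of R] max2 PQR C2 by blast
  obtain dP where dP: "dP\<in>P" "dP\<notin>C" using outside[OF _ Ccl, of P] max2 PQR C2 by blast
  obtain dQ where dQ: "dQ\<in>Q" "dQ\<notin>C" using outside[OF _ Ccl, of Q] max2 PQR C2 by blast
  have cP: "is_clique V E P" and cQ: "is_clique V E Q" and cR: "is_clique V E R" using cl2 PQR by blast+
  have dRP: "dR\<notin>P" using both_false[OF sg maxC cR cP _ dR(1) _ dR(2)] hprop by blast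
  have dRQ: "dR\<notin>Q" using both_false[OF sg maxC cR cQ _ dR(1) _ dR(2)] hprop by blast
  have dPQ: "dP\<notin>Q" using both_false[OF sg maxC cP cQ _ dP(1) _ dP(2)] hprop by blast
  have dPR: "dP\<notin>R" using both_false[OF sg maxC cP cR _ dP(1) _ dP(2)] hprop by blast
  have dQP: "dQ\<notin>P" using both_false[OF sg maxC cQ cP _ dQ(1) _ dQ(2)] hprop by blast
  have dQR: "dQ\<notin>R" using both_false[OF sg maxC cQ cR _ dQ(1) _ dQ(2)] hprop by blast
  have n1: "\<not> E dR x" using nonadj[OF sg maxC cov2 si2 PQR(3,1,2)] PQR hprop dR xu by blast
  have n2: "\<not> E dP y" using nonadj[OF sg maxC cov2 si2 PQR(1,2,3)] PQR hprop dP by blast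
  have n3: "\<not> E dQ z" using nonadj[OF sg maxC cov2 si2 PQR(2,1,3)] PQR hprop dQ by blast
  have symE: "\<And>a b. E a b \<Longrightarrow> E b a" and irr: "\<And>a. \<not> E a a" using sg unfolding simple_graph_def by blast+
  have xy: "x\<noteq>y" "x\<noteq>z" "y\<noteq>z" using xPQ PQR yQR by blast+
  have ne: "x\<noteq>dR" "x\<noteq>dP" "x\<noteq>dQ" "y\<noteq>dR" "y\<noteq>dP" "y\<noteq>dQ" "z\<noteq>dR" "z\<noteq>dP" "z\<noteq>dQ"
    using xu(1) PQR(7,8) dR(2) dP(2) dQ(2) by blast+
  have exy: "E x y" "E x z" "E y z"
    using clique_edge[OF Ccl xu(1) PQR(7) xy(1)] clique_edge[OF Ccl xu(1) PQR(8) xy(2)]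
      clique_edge[OF Ccl PQR(7) PQR(8) xy(3)] by auto
  have e1: "E dR y" "E dR z"
    using clique_edge[OF cR dR(1) yQR(2) ne(4)[symmetric]] clique_edge[OF cR dR(1) zPR(2) ne(7)[symmetric]] by auto
  have e2: "E dP x" "E dP z"
    using clique_edge[OF cP dP(1) xPQ(1) ne(2)[symmetric]] clique_edge[OF cP dP(1) zPR(1) ne(8)[symmetric]] by auto
  have e3: "E dQ x" "E dQ y"
    using clique_edge[OF cQ dQ(1) xPQ(2) ne(3)[symmetric]] clique_edge[OF cQ dQ(1) yQR(1) ne(6)[symmetric]] by auto
  have dd: "dR\<noteq>dP" "dR\<noteq>dQ" "dP\<noteq>dQ" using dR(1) dP(1) dQ(1) dRP dRQ dPQ by blast+
  have f1: "E dR dP" by (rule adj_out[OF sg cov1 si1 C1 PQR(8) dR(2) dP(2) symE[OF e1(2)] symE[OF e2(2)] dd(1)])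
  have f2: "E dR dQ" by (rule adj_out[OF sg cov1 si1 C1 PQR(7) dR(2) dQ(2) symE[OF e1(1)] symE[OF e3(2)] dd(2)])
  have f3: "E dP dQ" by (rule adj_out[OF sg cov1 si1 C1 xu(1) dP(2) dQ(2) symE[OF e2(1)] symE[OF e3(1)] dd(3)])
  have xV: "x\<in>V" "y\<in>V" "z\<in>V" using Ccl xu PQR unfolding is_clique_def by blast+
  have dV: "dR\<in>V" "dP\<in>V" "dQ\<in>V" using cP cQ cR dR dP dQ unfolding is_clique_def by blast+
  define f where "f = (\<lambda>i::nat. [x, y, z, dR, dP, dQ] ! i)"
  have fv: "f 0 = x" "f 1 = y" "f 2 = z" "f 3 = dR" "f 4 = dP" "f 5 = dQ"
    unfolding f_def by (simp_all add: numeral_eq_Suc)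
  have c6: "circ6_adj 0 0 = False" "circ6_adj 0 1" "circ6_adj 0 2" "circ6_adj 0 3 = False" "circ6_adj 0 4" "circ6_adj 0 5"
    "circ6_adj 1 0" "circ6_adj 1 1 = False" "circ6_adj 1 2" "circ6_adj 1 3" "circ6_adj 1 4 = False" "circ6_adj 1 5"
    "circ6_adj 2 0" "circ6_adj 2 1" "circ6_adj 2 2 = False" "circ6_adj 2 3" "circ6_adj 2 4" "circ6_adj 2 5 = False"
    "circ6_adj 3 0 = False" "circ6_adj 3 1" "circ6_adj 3 2" "circ6_adj 3 3 = False" "circ6_adj 3 4" "circ6_adj 3 5"
    "circ6_adj 4 0" "circ6_adj 4 1 = False" "circ6_adj 4 2" "circ6_adj 4 3" "circ6_adj 4 4 = False" "circ6_adj 4 5"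
    "circ6_adj 5 0" "circ6_adj 5 1" "circ6_adj 5 2 = False" "circ6_adj 5 3" "circ6_adj 5 4" "circ6_adj 5 5 = False"
    unfolding circ6_adj_def by simp_all
  have E_all: "E x y" "E y x" "E x z" "E z x" "E y z" "E z y"
    "E dR y" "E y dR" "E dR z" "E z dR" "E dP x" "E x dP" "E dP z" "E z dP"
    "E dQ x" "E x dQ" "E dQ y" "E y dQ" "E dR dP" "E dP dR" "E dR dQ" "E dQ dR" "E dP dQ" "E dQ dP"
    using exy e1 e2 e3 f1 f2 f3 symE by blast+
  have N_all: "\<not> E dR x" "\<not> E x dR" "\<not> E dP y" "\<not> E y dP" "\<not> E dQ z" "\<not> E z dQ"
    "\<not> E x x" "\<not> E y y" "\<not> E z z" "\<not> E dR dR" "\<not> E dP dP" "\<not> E dQ dQ"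
    using n1 n2 n3 symE irr by blast+
  have inj: "inj_on f {0..<6}"
  proof (rule inj_onI)
    fix i j assume "i \<in> {0..<6::nat}" "j \<in> {0..<6::nat}" "f i = f j"
    then have "i < 6" "j < 6" "f i = f j" by auto
    then show "i = j"
      using fv xy ne dd lt6[of i] lt6[of j] by fastforce
  qed
  have img: "f ` {0..<6} \<subseteq> V"
  proof
    fix v assume "v \<in> f ` {0..<6}"
    then obtain i where "i < 6" "v = f i" by auto
    then show "v \<in> V" using fv xV dV lt6[of i]
      by auto
  qed
  have adj: "\<forall>i<6. \<forall>j<6. E (f i) (f j) \<longleftrightarrow> circ6_adj i j"
    unfolding all6 fv c6 by (simp only: E_all N_all c6 simp_thms)
  show ?thesis unfolding has_induced_circ6_def using inj img adj by blast
qed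

end
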